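(* Let $x$ be a speedable number which is nearly computable. Then $x$ is regainingly approximable.
   Context: A left-computable real $x$ (i.e. limit of a computable non-decreasing sequence of rationals) is speedable if there exist $\rho\in(0,1)$ and a computable strictly increasing sequence of rationals $(x_n)_n$ converging to $x$ such that $\frac{x-x_{n+1}}{x-x_n}\le\rho$ for infinitely many $n\in\mathbb{N}$. A real $x$ is regainingly approximable if there is a computable non-decreasing sequence of rationals $(x_n)_n$ converging to $x$ with $x - x_n < 2^{-n}$ for infinitely many $n\in\mathbb{N}$. A function $f:\mathbb{N}\to\mathbb{N}$ is a modulus of convergence of a convergent sequence $(y_n)_n$ with limit $y$ if for all $n$ and all $m\ge f(n)$ we have $|y-y_m|<2^{-n}$; $(y_n)_n$ converges computably if it has a computable modulus of convergence. A sequence $(x_n)_n$ converges nearly computably if it converges and for every computable increasing function $s:\mathbb{N}\to\mathbb{N}$ the sequence $(x_{s(n+1)}-x_{s(n)})_n$ converges computably to $0$. A real is nearly computable if some computable sequence of rationals converges nearly computably to it. *)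

theory Defs
  imports Complex_Main
begin

datatype recf =
    Zr
  | Sc
  | Pj nat
  | Cn recf "recf list"
  | Pr recf recf
  | Mn recf

inductive evalr :: "recf \<Rightarrow> nat list \<Rightarrow> nat \<Rightarrow> bool" where
  ev_Zr: "evalr Zr xs 0"
| ev_Sc: "evalr Sc (x # xs) (Suc x)"
| ev_Pj: "i < length xs \<Longrightarrow> evalr (Pj i) xs (xs ! i)"
| ev_Cn: "length ys = length gs \<Longrightarrow> (\<forall>i < length gs. evalr (gs ! i) xs (ys ! i))
          \<Longrightarrow> evalr f ys v \<Longrightarrow> evalr (Cn f gs) xs v"
| ev_Pr0: "evalr f xs v \<Longrightarrow> evalr (Pr f g) (0 # xs) v"
| ev_PrS: "evalr (Pr f g) (n # xs) w \<Longrightarrow> evalr g (n # w # xs) v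
          \<Longrightarrow> evalr (Pr f g) (Suc n # xs) v"
| ev_Mn: "evalr f (y # xs) 0 \<Longrightarrow> (\<forall>z < y. \<exists>u. u > 0 \<and> evalr f (z # xs) u)
          \<Longrightarrow> evalr (Mn f) xs y"

definition computable_nat :: "(nat \<Rightarrow> nat) \<Rightarrow> bool" where
  "computable_nat g \<longleftrightarrow> (\<exists>f. \<forall>n. evalr f [n] (g n))"

definition computable_rat_seq :: "(nat \<Rightarrow> rat) \<Rightarrow> bool" where
  "computable_rat_seq q \<longleftrightarrow> (\<exists>a b c. computable_nat a \<and> computable_nat b \<and> computable_nat c \<and>
     (\<forall>n. q n = (of_nat (a n) - of_nat (b n)) / (of_nat (c n) + 1)))"

definition left_computable :: "real \<Rightarrow> bool" where
  "left_computable x \<longleftrightarrow> (\<exists>q. computable_rat_seq q \<and> mono q \<and> (\<lambda>n. real_of_rat (q n)) \<longlonglongrightarrow> x)"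

definition speedable :: "real \<Rightarrow> bool" where
  "speedable x \<longleftrightarrow> left_computable x \<and>
     (\<exists>\<rho>::real. 0 < \<rho> \<and> \<rho> < 1 \<and>
        (\<exists>q. computable_rat_seq q \<and> strict_mono q \<and> (\<lambda>n. real_of_rat (q n)) \<longlonglongrightarrow> x \<and>
             (\<exists>\<^sub>\<infinity>n. (x - real_of_rat (q (Suc n))) / (x - real_of_rat (q n)) \<le> \<rho>)))"

definition regainingly_approximable :: "real \<Rightarrow> bool" where
  "regainingly_approximable x \<longleftrightarrow>
     (\<exists>q. computable_rat_seq q \<and> mono q \<and> (\<lambda>n. real_of_rat (q n)) \<longlonglongrightarrow> x \<and>
          (\<exists>\<^sub>\<infinity>n. x - real_of_rat (q n) < 2 powi (- int n)))"

definition is_modulus :: "(nat \<Rightarrow> real) \<Rightarrow> real \<Rightarrow> (nat \<Rightarrow> nat) \<Rightarrow> bool" where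
  "is_modulus y L f \<longleftrightarrow> (\<forall>n. \<forall>m \<ge> f n. \<bar>L - y m\<bar> < 2 powi (- int n))"

definition converges_computably :: "(nat \<Rightarrow> real) \<Rightarrow> real \<Rightarrow> bool" where
  "converges_computably y L \<longleftrightarrow> y \<longlonglongrightarrow> L \<and> (\<exists>f. computable_nat f \<and> is_modulus y L f)"

definition converges_nearly_computably :: "(nat \<Rightarrow> real) \<Rightarrow> bool" where
  "converges_nearly_computably x \<longleftrightarrow> convergent x \<and>
     (\<forall>s. computable_nat s \<and> strict_mono s \<longrightarrow>
          converges_computably (\<lambda>n. x (s (Suc n)) - x (s n)) 0)"

definition nearly_computable :: "real \<Rightarrow> bool" where
  "nearly_computable x \<longleftrightarrow> (\<exists>q. computable_rat_seq q \<and> (\<lambda>n. real_of_rat (q n)) \<longlonglongrightarrow> x \<and>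
     converges_nearly_computably (\<lambda>n. real_of_rat (q n)))"

end

theory Submission
  imports Defs "HOL-Library.Infinite_Set"
begin


definition rcomp :: "nat \<Rightarrow> (nat list \<Rightarrow> nat) \<Rightarrow> bool" where
  "rcomp k f \<longleftrightarrow> (\<exists>r. \<forall>xs. length xs = k \<longrightarrow> evalr r xs (f xs))"

lemma rcomp_cong: "rcomp k f \<Longrightarrow> (\<And>xs. length xs = k \<Longrightarrow> f xs = g xs) \<Longrightarrow> rcomp k g"
  unfolding rcomp_def by metis

lemma rcomp_zero: "rcomp k (\<lambda>_. 0)"
  unfolding rcomp_def by (auto intro: evalr.intros)

lemma rcomp_proj: "i < k \<Longrightarrow> rcomp k (\<lambda>xs. xs ! i)"
  unfolding rcomp_def by (auto intro: evalr.intros)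

lemma rcomp_Suc: "rcomp k f \<Longrightarrow> rcomp k (\<lambda>xs. Suc (f xs))"
  unfolding rcomp_def
proof -
  assume "\<exists>r. \<forall>xs. length xs = k \<longrightarrow> evalr r xs (f xs)"
  then obtain r where r: "\<forall>xs. length xs = k \<longrightarrow> evalr r xs (f xs)" by blast
  show "\<exists>r. \<forall>xs. length xs = k \<longrightarrow> evalr r xs (Suc (f xs))"
  proof (intro exI allI impI)
    fix xs :: "nat list" assume "length xs = k"
    then show "evalr (Cn Sc [r]) xs (Suc (f xs))"
      using r by (intro ev_Cn[where ys="[f xs]"]) (auto intro: evalr.intros)
  qed
qed

lemma list_choice: "\<forall>f\<in>set fs. \<exists>r. P f r \<Longrightarrow> \<exists>rs. length rs = length fs \<and> (\<forall>i<length fs. P (fs!i) (rs!i))"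
proof (induction fs)
  case Nil then show ?case by auto
next
  case (Cons f fs)
  then obtain rs where rs: "length rs = length fs" "\<forall>i<length fs. P (fs!i) (rs!i)" by auto
  from Cons obtain r where "P f r" by auto
  with rs show ?case
    by (intro exI[where x="r#rs"]) (auto simp: nth_Cons split: nat.splits)
qed

lemma rcomp_Cn: "rcomp (length fs) g \<Longrightarrow> \<forall>f\<in>set fs. rcomp k f \<Longrightarrow> rcomp k (\<lambda>xs. g (map (\<lambda>f. f xs) fs))"
proof -
  assume g: "rcomp (length fs) g" and fs: "\<forall>f\<in>set fs. rcomp k f"
  from g obtain rg where rg: "\<forall>ys. length ys = length fs \<longrightarrow> evalr rg ys (g ys)" unfolding rcomp_def by blast
  from fs have "\<forall>f\<in>set fs. \<exists>r. \<forall>xs. length xs = k \<longrightarrow> evalr r xs (f xs)" unfolding rcomp_def by blast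
  from list_choice[OF this] obtain rs where rs: "length rs = length fs"
    "\<forall>i<length fs. \<forall>xs. length xs = k \<longrightarrow> evalr (rs!i) xs ((fs!i) xs)" by blast
  show ?thesis unfolding rcomp_def
  proof (intro exI allI impI)
    fix xs :: "nat list" assume "length xs = k"
    then show "evalr (Cn rg rs) xs (g (map (\<lambda>f. f xs) fs))"
      using rs rg by (intro ev_Cn[where ys="map (\<lambda>f. f xs) fs"]) auto
  qed
qed

lemma rcomp_comp1: "rcomp 1 g \<Longrightarrow> rcomp k f1 \<Longrightarrow> rcomp k (\<lambda>xs. g [f1 xs])"
  using rcomp_Cn[of "[f1]" g k] by simp

lemma rcomp_comp2: "rcomp 2 g \<Longrightarrow> rcomp k f1 \<Longrightarrow> rcomp k f2 \<Longrightarrow> rcomp k (\<lambda>xs. g [f1 xs, f2 xs])"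
  using rcomp_Cn[of "[f1, f2]" g k] by (simp add: numeral_2_eq_2)

primrec prec :: "(nat list \<Rightarrow> nat) \<Rightarrow> (nat list \<Rightarrow> nat) \<Rightarrow> nat \<Rightarrow> nat list \<Rightarrow> nat" where
  "prec f g 0 ys = f ys"
| "prec f g (Suc n) ys = g (n # prec f g n ys # ys)"

lemma rcomp_Pr: "rcomp k f \<Longrightarrow> rcomp (Suc (Suc k)) g \<Longrightarrow> rcomp (Suc k) (\<lambda>xs. prec f g (hd xs) (tl xs))"
proof -
  assume "rcomp k f" "rcomp (Suc (Suc k)) g"
  then obtain rf rg where rf: "\<forall>xs. length xs = k \<longrightarrow> evalr rf xs (f xs)"
    and rg: "\<forall>xs. length xs = Suc (Suc k) \<longrightarrow> evalr rg xs (g xs)" unfolding rcomp_def by blast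
  have *: "length ys = k \<Longrightarrow> evalr (Pr rf rg) (n # ys) (prec f g n ys)" for n ys
  proof (induction n)
    case 0 then show ?case using rf by (auto intro: ev_Pr0)
  next
    case (Suc n)
    then show ?case using rg by (auto intro!: ev_PrS)
  qed
  show ?thesis unfolding rcomp_def
  proof (intro exI allI impI)
    fix xs :: "nat list" assume "length xs = Suc k"
    then obtain n ys where "xs = n # ys" "length ys = k" by (cases xs) auto
    then show "evalr (Pr rf rg) xs (prec f g (hd xs) (tl xs))" using * by simp
  qed
qed

lemma rcomp_Mn: "rcomp (Suc k) h \<Longrightarrow> (\<And>xs. length xs = k \<Longrightarrow> \<exists>y. h (y#xs) = 0)
   \<Longrightarrow> rcomp k (\<lambda>xs. LEAST y. h (y#xs) = 0)"
proof -
  assume "rcomp (Suc k) h" and ex: "\<And>xs. length xs = k \<Longrightarrow> \<exists>y. h (y#xs) = 0"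
  then obtain rh where rh: "\<forall>xs. length xs = Suc k \<longrightarrow> evalr rh xs (h xs)" unfolding rcomp_def by blast
  show ?thesis unfolding rcomp_def
  proof (intro exI allI impI)
    fix xs :: "nat list" assume l: "length xs = k"
    let ?y = "LEAST y. h (y#xs) = 0"
    have h0: "h (?y # xs) = 0" using ex[OF l] by (rule LeastI_ex)
    have "\<forall>z<?y. \<exists>u. u > 0 \<and> evalr rh (z # xs) u"
    proof (intro allI impI)
      fix z assume "z < ?y"
      then have "h (z#xs) \<noteq> 0" by (rule not_less_Least)
      then show "\<exists>u. u > 0 \<and> evalr rh (z # xs) u" using rh l by auto
    qed
    moreover have "evalr rh (?y # xs) 0" using rh l h0 by (metis length_Cons)
    ultimately show "evalr (Mn rh) xs ?y" by (intro ev_Mn)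
  qed
qed

lemma rcomp_const: "rcomp k (\<lambda>_. c)"
  by (induction c) (auto intro: rcomp_zero rcomp_Suc)

lemma rcomp_add2: "rcomp 2 (\<lambda>xs. xs!0 + xs!1)"
proof -
  have "rcomp 2 (\<lambda>xs. prec (\<lambda>ys. ys!0) (\<lambda>zs. Suc (zs!1)) (hd xs) (tl xs))"
    using rcomp_Pr[of 1 "\<lambda>ys. ys!0" "\<lambda>zs. Suc (zs!1)"] by (simp add: rcomp_proj rcomp_Suc numeral_2_eq_2)
  moreover have "prec (\<lambda>ys. ys!0) (\<lambda>zs. Suc (zs!1)) n ys = n + ys!0" for n ys
    by (induction n) auto
  ultimately show ?thesis
    by (elim rcomp_cong) (auto simp: length_Suc_conv numeral_2_eq_2)
qed

lemma rcomp_add: "rcomp k f \<Longrightarrow> rcomp k g \<Longrightarrow> rcomp k (\<lambda>xs. f xs + g xs)"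
  using rcomp_comp2[OF rcomp_add2] by simp

lemma rcomp_mult2: "rcomp 2 (\<lambda>xs. xs!0 * xs!1)"
proof -
  have "rcomp 2 (\<lambda>xs. prec (\<lambda>ys. 0) (\<lambda>zs. zs!1 + zs!2) (hd xs) (tl xs))"
    using rcomp_Pr[of 1 "\<lambda>ys. 0" "\<lambda>zs. zs!1 + zs!2"] by (simp add: rcomp_proj rcomp_zero rcomp_add numeral_2_eq_2)
  moreover have "prec (\<lambda>ys. 0) (\<lambda>zs. zs!1 + zs!2) n ys = n * ys!0" for n ys
    by (induction n) auto
  ultimately show ?thesis
    by (elim rcomp_cong) (auto simp: length_Suc_conv numeral_2_eq_2)
qed

lemma rcomp_mult: "rcomp k f \<Longrightarrow> rcomp k g \<Longrightarrow> rcomp k (\<lambda>xs. f xs * g xs)"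
  using rcomp_comp2[OF rcomp_mult2] by simp

lemma rcomp_pred1: "rcomp 1 (\<lambda>xs. xs!0 - 1)"
proof -
  have "rcomp 1 (\<lambda>xs. prec (\<lambda>ys. 0) (\<lambda>zs. zs!0) (hd xs) (tl xs))"
    using rcomp_Pr[of 0 "\<lambda>ys. 0" "\<lambda>zs. zs!0"] by (simp add: rcomp_proj rcomp_zero)
  moreover have "prec (\<lambda>ys. 0) (\<lambda>zs. zs!0) n ys = n - 1" for n ys
    by (induction n) auto
  ultimately show ?thesis
    by (elim rcomp_cong) (auto simp: length_Suc_conv)
qed

lemma rcomp_diff2: "rcomp 2 (\<lambda>xs. xs!1 - xs!0)"
proof -
  have "rcomp 2 (\<lambda>xs. prec (\<lambda>ys. ys!0) (\<lambda>zs. zs!1 - 1) (hd xs) (tl xs))"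
  proof -
    have "rcomp 3 (\<lambda>zs. zs!1 - 1)" using rcomp_comp1[OF rcomp_pred1, of 3 "\<lambda>zs. zs!1"] by (simp add: rcomp_proj)
    then show ?thesis using rcomp_Pr[of 1 "\<lambda>ys. ys!0" "\<lambda>zs. zs!1 - 1"]
      by (simp add: rcomp_proj numeral_2_eq_2 numeral_3_eq_3)
  qed
  moreover have "prec (\<lambda>ys. ys!0) (\<lambda>zs. zs!1 - 1) n ys = ys!0 - n" for n ys
    by (induction n) auto
  ultimately show ?thesis
    by (elim rcomp_cong) (auto simp: length_Suc_conv numeral_2_eq_2)
qed

lemma rcomp_diff: "rcomp k f \<Longrightarrow> rcomp k g \<Longrightarrow> rcomp k (\<lambda>xs. f xs - g xs)"
  using rcomp_comp2[OF rcomp_diff2, of k g f] by simp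

lemma rcomp_pow2_1: "rcomp 1 (\<lambda>xs. 2 ^ (xs!0))"
proof -
  have "rcomp 1 (\<lambda>xs. prec (\<lambda>ys. 1) (\<lambda>zs. zs!1 + zs!1) (hd xs) (tl xs))"
    using rcomp_Pr[of 0 "\<lambda>ys. 1" "\<lambda>zs. zs!1 + zs!1"] by (simp add: rcomp_proj rcomp_const rcomp_add)
  moreover have "prec (\<lambda>ys. 1) (\<lambda>zs. zs!1 + zs!1) n ys = 2 ^ n" for n ys
    by (induction n) auto
  ultimately show ?thesis
    by (elim rcomp_cong) (auto simp: length_Suc_conv)
qed

lemma rcomp_pow2: "rcomp k f \<Longrightarrow> rcomp k (\<lambda>xs. 2 ^ f xs)"
  using rcomp_comp1[OF rcomp_pow2_1] by simp

lemma computable_rcomp: "computable_nat a \<Longrightarrow> rcomp 1 (\<lambda>xs. a (xs!0))"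
  unfolding computable_nat_def rcomp_def
proof (elim exE, intro exI allI impI)
  fix f and xs :: "nat list" assume "\<forall>n. evalr f [n] (a n)" "length xs = 1"
  then show "evalr f xs (a (xs!0))" by (cases xs) auto
qed

lemma rcomp_computable: "rcomp 1 g \<Longrightarrow> computable_nat (\<lambda>n. g [n])"
  unfolding computable_nat_def rcomp_def
proof (elim exE, intro exI allI)
  fix r n assume "\<forall>xs. length xs = 1 \<longrightarrow> evalr r xs (g xs)"
  then show "evalr r [n] (g [n])" by auto
qed

lemma rcomp_app: "computable_nat a \<Longrightarrow> rcomp k f \<Longrightarrow> rcomp k (\<lambda>xs. a (f xs))"
  using rcomp_comp1[OF computable_rcomp] by simp

lemma computable_comp: "computable_nat a \<Longrightarrow> computable_nat h \<Longrightarrow> computable_nat (a \<circ> h)"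
proof -
  assume a: "computable_nat a" and h: "computable_nat h"
  have "rcomp 1 (\<lambda>xs. a (h (xs!0)))"
    by (intro rcomp_app[OF a] rcomp_app[OF h] rcomp_proj) simp
  from rcomp_computable[OF this] show ?thesis by (simp add: o_def)
qed

lemma computable_rat_seq_comp: "computable_rat_seq q \<Longrightarrow> computable_nat h \<Longrightarrow> computable_rat_seq (q \<circ> h)"
  unfolding computable_rat_seq_def
  by (metis (no_types, lifting) comp_apply computable_comp)



lemma rat_seq_real:
  assumes "computable_rat_seq q"
  shows "\<exists>a b c. computable_nat a \<and> computable_nat b \<and> computable_nat c \<and>
    (\<forall>n. real_of_rat (q n) = (real (a n) - real (b n)) / (real (c n) + 1))"
proof -
  from assms obtain a b c where "computable_nat a" "computable_nat b" "computable_nat c"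
    "\<forall>n. q n = (of_nat (a n) - of_nat (b n)) / (of_nat (c n) + 1)"
    unfolding computable_rat_seq_def by blast
  then show ?thesis
    by (intro exI[of _ a] exI[of _ b] exI[of _ c]) (simp add: of_rat_divide of_rat_diff of_rat_add)
qed

lemma cond_iff:
  fixes a b c a' b' c' n :: nat
  shows "\<bar>(real a - real b)/(real c + 1) - (real a' - real b')/(real c' + 1)\<bar> * 2^n < 1 \<longleftrightarrow>
    2^n * ((a*(c'+1) + b'*(c+1) - (a'*(c+1) + b*(c'+1))) + (a'*(c+1) + b*(c'+1) - (a*(c'+1) + b'*(c+1)))) < (c+1)*(c'+1)"
proof -
  define A where "A = a*(c'+1) + b'*(c+1)"
  define B where "B = a'*(c+1) + b*(c'+1)"
  have d: "(real a - real b)/(real c + 1) - (real a' - real b')/(real c' + 1) = (real A - real B) / ((real c + 1) * (real c' + 1))"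
    unfolding A_def B_def by (simp add: field_simps)
  have ab: "\<bar>real A - real B\<bar> = real ((A - B) + (B - A))" by (cases "A \<le> B") auto
  have pos: "(real c + 1) * (real c' + 1) > 0" by simp
  have "\<bar>(real a - real b)/(real c + 1) - (real a' - real b')/(real c' + 1)\<bar> * 2^n < 1
     \<longleftrightarrow> real ((A - B) + (B - A)) / ((real c + 1) * (real c' + 1)) * 2^n < 1"
    by (simp add: d ab abs_divide)
  also have "\<dots> \<longleftrightarrow> real ((A - B) + (B - A)) * 2^n < (real c + 1) * (real c' + 1)"
    using pos by (simp add: field_simps)
  also have "\<dots> \<longleftrightarrow> 2^n * ((A - B) + (B - A)) < (c+1)*(c'+1)"
  proof -
    have "real ((A - B) + (B - A)) * 2^n = real (2^n * ((A - B) + (B - A)))" by simp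
    moreover have "(real c + 1) * (real c' + 1) = real ((c+1)*(c'+1))" by (simp add: algebra_simps)
    ultimately show ?thesis by (simp only: of_nat_less_iff)
  qed
  finally show ?thesis unfolding A_def B_def .
qed

lemma bracket:
  fixes h :: "nat \<Rightarrow> nat"
  assumes "strict_mono h" "h 0 \<le> n"
  shows "\<exists>k. h k \<le> n \<and> n < h (Suc k)"
proof -
  have ex: "n < h (Suc n)" using strict_mono_imp_increasing[OF assms(1), of "Suc n"] by simp
  define L where "L = (LEAST K. n < h K)"
  have L1: "n < h L" unfolding L_def using ex by (rule LeastI)
  have "L \<noteq> 0"
  proof
    assume "L = 0" then show False using L1 assms(2) by simp
  qed
  then obtain k where k: "L = Suc k" by (cases L) auto
  have "\<not> n < h k" unfolding L_def by (rule not_less_Least) (simp add: k L_def[symmetric])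
  then show ?thesis using L1 k by (intro exI[of _ k]) auto
qed

lemma strict_monoI_Suc': "(\<And>n. f n < f (Suc n)) \<Longrightarrow> strict_mono (f::nat \<Rightarrow> 'a::order)"
  by (simp add: strict_mono_Suc_iff)

lemma two_powi: "(2::real) powi (- int n) = 1 / 2^n"
  by (simp add: power_int_minus divide_inverse)

theorem theorem5p8:
  fixes x :: real
  assumes "speedable x" and "nearly_computable x"
  shows "regainingly_approximable x"
proof -
  from assms(1) obtain \<rho> q where rho: "0 < \<rho>" "\<rho> < 1" and qc: "computable_rat_seq q"
    and qm: "strict_mono q" and ql: "(\<lambda>n. real_of_rat (q n)) \<longlonglongrightarrow> x"
    and qs: "\<exists>\<^sub>\<infinity>n. (x - real_of_rat (q (Suc n))) / (x - real_of_rat (q n)) \<le> \<rho>"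
    unfolding speedable_def by blast
  from assms(2) obtain y where yc: "computable_rat_seq y" and yl: "(\<lambda>n. real_of_rat (y n)) \<longlonglongrightarrow> x"
    and ync: "converges_nearly_computably (\<lambda>n. real_of_rat (y n))"
    unfolding nearly_computable_def by blast
  define P where "P m = real_of_rat (q m)" for m
  define Y where "Y m = real_of_rat (y m)" for m
  obtain a b c where ac: "computable_nat a" and bc: "computable_nat b" and cc: "computable_nat c"
    and Yeq: "\<And>n. Y n = (real (a n) - real (b n)) / (real (c n) + 1)"
    using rat_seq_real[OF yc] unfolding Y_def by blast
  obtain a' b' c' where ac': "computable_nat a'" and bc': "computable_nat b'" and cc': "computable_nat c'"
    and Peq: "\<And>n. P n = (real (a' n) - real (b' n)) / (real (c' n) + 1)"
    using rat_seq_real[OF qc] unfolding P_def by blast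
  define H where "H n m = 2^n * ((a m*(c' m+1) + b' m*(c m+1) - (a' m*(c m+1) + b m*(c' m+1)))
     + (a' m*(c m+1) + b m*(c' m+1) - (a m*(c' m+1) + b' m*(c m+1))))" for n m
  define R where "R m = (c m + 1) * (c' m + 1)" for m
  have condiff: "\<bar>Y m - P m\<bar> * 2^n < 1 \<longleftrightarrow> H n m < R m" for n m
    unfolding Yeq Peq H_def R_def by (rule cond_iff)
  have lim0: "(\<lambda>m. Y m - P m) \<longlonglongrightarrow> 0"
    using tendsto_diff[OF yl ql] unfolding Y_def P_def by simp
  have ex: "\<exists>m>w. H n m < R m" for w n
  proof -
    have "(1::real) / 2^n > 0" by simp
    from lim0[unfolded LIMSEQ_iff, rule_format, OF this] obtain N where
      N: "\<And>m. m \<ge> N \<Longrightarrow> norm (Y m - P m - 0) < 1 / 2^n" by blast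
    define m where "m = max N (Suc w)"
    have "\<bar>Y m - P m\<bar> < 1 / 2^n" using N[of m] by (simp add: m_def)
    then have "\<bar>Y m - P m\<bar> * 2^n < 1" by (simp add: field_simps)
    then show ?thesis using condiff by (intro exI[of _ m]) (auto simp: m_def)
  qed
  define h0 where "h0 = (\<lambda>zs::nat list. Suc (H 0 (zs!0)) - R (zs!0))"
  define h1 where "h1 = (\<lambda>zs::nat list. (Suc (zs!2) - zs!0) + (Suc (H (Suc (zs!1)) (zs!0)) - R (zs!0)))"
  define g0 where "g0 = (\<lambda>xs::nat list. LEAST z. h0 (z # xs) = 0)"
  define g1 where "g1 = (\<lambda>xs::nat list. LEAST z. h1 (z # xs) = 0)"
  define s where "s n = prec g0 g1 n []" for n
  have s0: "s 0 = (LEAST z. H 0 z < R z)"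
    unfolding s_def g0_def h0_def by (simp add: Suc_le_eq)
  have sS: "s (Suc n) = (LEAST z. s n < z \<and> H (Suc n) z < R z)" for n
  proof -
    have "s (Suc n) = (LEAST z. h1 [z, n, s n] = 0)" unfolding s_def g1_def by simp
    moreover have "h1 [z, n, s n] = 0 \<longleftrightarrow> s n < z \<and> H (Suc n) z < R z" for z
      unfolding h1_def by auto
    ultimately show ?thesis by simp
  qed
  have sprop: "H n (s n) < R (s n)" for n
  proof (cases n)
    case 0 then show ?thesis using ex[of 0 0] s0 by (metis (mono_tags, lifting) LeastI_ex)
  next
    case (Suc k)
    have "s k < s (Suc k) \<and> H (Suc k) (s (Suc k)) < R (s (Suc k))"
    proof -
      have "\<exists>z. s k < z \<and> H (Suc k) z < R z" using ex[of "s k" "Suc k"] by auto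
      from LeastI_ex[OF this] show ?thesis unfolding sS[of k] .
    qed
    then show ?thesis using Suc by simp
  qed
  have sinc: "s n < s (Suc n)" for n
  proof -
    have "s n < s (Suc n) \<and> H (Suc n) (s (Suc n)) < R (s (Suc n))"
    proof -
      have "\<exists>z. s n < z \<and> H (Suc n) z < R z" using ex[of "s n" "Suc n"] by auto
      from LeastI_ex[OF this] show ?thesis unfolding sS[of n] .
    qed
    then show ?thesis by simp
  qed
  have smono: "strict_mono s" using sinc by (rule strict_monoI_Suc')
  have sclose: "\<bar>Y (s n) - P (s n)\<bar> < 1 / 2^n" for n
    using sprop[of n] condiff[of "s n" n] by (simp add: field_simps)

  note rc = rcomp_app[OF ac] rcomp_app[OF bc] rcomp_app[OF cc] rcomp_app[OF ac'] rcomp_app[OF bc'] rcomp_app[OF cc']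
  have rh0: "rcomp 1 h0" unfolding h0_def H_def R_def
    by (intro rc rcomp_add rcomp_mult rcomp_diff rcomp_pow2 rcomp_Suc rcomp_proj rcomp_const) simp_all
  have rh1: "rcomp 3 h1" unfolding h1_def H_def R_def
    by (intro rc rcomp_add rcomp_mult rcomp_diff rcomp_pow2 rcomp_Suc rcomp_proj rcomp_const) simp_all
  have rg0: "rcomp 0 g0" unfolding g0_def
  proof (rule rcomp_Mn)
    show "rcomp (Suc 0) h0" using rh0 by simp
    show "\<exists>y. h0 (y # xs) = 0" for xs using ex[of 0 0] unfolding h0_def by (auto simp: Suc_le_eq)
  qed
  have rg1: "rcomp 2 g1" unfolding g1_def
  proof (rule rcomp_Mn)
    show "rcomp (Suc 2) h1" using rh1 by simp
    show "\<exists>y. h1 (y # xs) = 0" for xs using ex[of "xs!1" "Suc (xs!0)"] unfolding h1_def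
      by (auto simp: Suc_le_eq)
  qed
  have "rcomp 1 (\<lambda>xs. prec g0 g1 (hd xs) (tl xs))"
    using rcomp_Pr[of 0 g0 g1] rg0 rg1 by (simp add: numeral_2_eq_2)
  then have "rcomp 1 (\<lambda>xs. s (xs!0))"
    by (rule rcomp_cong) (auto simp: s_def length_Suc_conv)
  then have sc: "computable_nat s" using rcomp_computable by fastforce

  have snc: "converges_computably (\<lambda>n. Y (s (Suc n)) - Y (s n)) 0"
    using ync sc smono unfolding converges_nearly_computably_def Y_def by blast
  then obtain f where fc: "computable_nat f" and fmod: "is_modulus (\<lambda>n. Y (s (Suc n)) - Y (s n)) 0 f"
    unfolding converges_computably_def by blast
  define F where "F k = f (k+2) + k + 2" for k
  have Fprop: "\<bar>P (s (Suc m)) - P (s m)\<bar> < 1/2^k" if "m \<ge> F k" for m k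
  proof -
    have m1: "m \<ge> f (k+2)" "m \<ge> k+2" using that F_def by auto
    have d1: "\<bar>Y (s (Suc m)) - Y (s m)\<bar> < 1/2^(k+2)"
      using fmod m1(1) unfolding is_modulus_def two_powi by force
    have pw: "1/2^m' \<le> 1/(2::real)^(k+2)" if "m' \<ge> k+2" for m'
    proof -
      have "(2::real)^(k+2) \<le> 2^m'" by (rule power_increasing) (use that in auto)
      then show ?thesis by (rule divide_left_mono) auto
    qed
    have e1: "\<bar>Y (s m) - P (s m)\<bar> < 1/2^(k+2)" using sclose[of m] pw[OF m1(2)] by linarith
    have e2: "\<bar>Y (s (Suc m)) - P (s (Suc m))\<bar> < 1/2^(k+2)" using sclose[of "Suc m"] pw[of "Suc m"] m1(2) by force
    have "\<bar>P (s (Suc m)) - P (s m)\<bar> < 3/2^(k+2)" using d1 e1 e2 by (simp add: abs_less_iff)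
    also have "\<dots> < 1/2^k" by (simp add: power_add divide_simps)
    finally show ?thesis .
  qed
  obtain cc where ccp: "(1/2::real)^cc < 1 - \<rho>" using real_arch_pow_inv[of "1 - \<rho>" "1/2"] rho by auto
  have cc2: "1/(2::real)^cc < 1 - \<rho>" using ccp by (simp add: power_one_over)
  define G where "G n = prec (\<lambda>_. F cc + 1) (\<lambda>zs. zs!1 + F (Suc (zs!0) + cc) + 1) n []" for n
  have G0: "G 0 = F cc + 1" and GS: "G (Suc n) = G n + F (Suc n + cc) + 1" for n
    by (simp_all add: G_def)
  have GF: "F (k + cc) \<le> G k" for k by (cases k) (auto simp: G0 GS)
  have Gmono: "strict_mono G" by (rule strict_monoI_Suc') (simp add: GS)
  have rG0: "rcomp 2 (\<lambda>zs. zs!1 + F (Suc (zs!0) + cc) + 1)" unfolding F_def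
    by (intro rcomp_app[OF fc] rcomp_add rcomp_Suc rcomp_proj rcomp_const) simp_all
  have "rcomp 1 (\<lambda>xs. prec (\<lambda>_. F cc + 1) (\<lambda>zs. zs!1 + F (Suc (zs!0) + cc) + 1) (hd xs) (tl xs))"
    using rcomp_Pr[OF rcomp_const[of 0 "F cc + 1"]] rG0 by (simp add: numeral_2_eq_2)
  then have rG: "rcomp 1 (\<lambda>xs. G (xs!0))"
    by (rule rcomp_cong) (auto simp: G_def length_Suc_conv)
  define t where "t k = s (G (Suc k))" for k
  have "rcomp 1 (\<lambda>xs. (\<lambda>ys. G (ys!0)) [Suc (xs!0)])"
    by (rule rcomp_comp1[OF rG]) (intro rcomp_Suc rcomp_proj, simp)
  then have "rcomp 1 (\<lambda>xs. s (G (Suc (xs!0))))" using rcomp_app[OF sc] by simp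
  then have tc: "computable_nat t" unfolding t_def using rcomp_computable by fastforce
  have tmono: "strict_mono t"
    by (rule strict_monoI_Suc') (simp add: t_def strict_monoD[OF smono] strict_monoD[OF Gmono])
  have Pmono: "strict_mono P" unfolding P_def
    by (rule strict_monoI) (simp add: strict_monoD[OF qm] of_rat_less)
  have Pltx: "P j < x" for j
  proof -
    have "incseq P" using Pmono by (simp add: strict_mono_mono)
    then have "P (Suc j) \<le> x" using incseq_le ql unfolding P_def by blast
    then show ?thesis using strict_monoD[OF Pmono, of j "Suc j"] by simp
  qed
  have Ple: "i \<le> j \<Longrightarrow> P i \<le> P j" for i j using strict_mono_leD[OF Pmono] .
  have key: "\<exists>k>M. x - P (t k) < 1/2^k" for M
  proof -
    from qs obtain j where j: "j > s (G (Suc M))"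
      and sp: "(x - P (Suc j)) / (x - P j) \<le> \<rho>"
      unfolding INFM_nat P_def by blast
    have "s 0 \<le> j" using strict_mono_leD[OF smono, of 0 "G (Suc M)"] j by simp
    from bracket[OF smono this] obtain n where n: "s n \<le> j" "j < s (Suc n)" by blast
    have nG: "G (Suc M) \<le> n"
    proof (rule ccontr)
      assume "\<not> G (Suc M) \<le> n"
      then have "Suc n \<le> G (Suc M)" by simp
      then have "s (Suc n) \<le> s (G (Suc M))" by (rule strict_mono_leD[OF smono])
      then show False using j n by simp
    qed
    have "G 0 \<le> n" using strict_mono_leD[OF Gmono, of 0 "Suc M"] nG by simp
    from bracket[OF Gmono this] obtain k where k: "G k \<le> n" "n < G (Suc k)" by blast
    have kM: "k > M"
    proof -
      have "G (Suc M) < G (Suc k)" using nG k by simp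
      then show ?thesis using strict_mono_less[OF Gmono] by simp
    qed
    define r0 where "r0 = P (s n)"
    define r1 where "r1 = P (s (Suc n))"
    have xj: "x - P j > 0" using Pltx[of j] by simp
    have sp2: "x - P (Suc j) \<le> \<rho> * (x - P j)" using sp xj by (simp add: divide_le_eq)
    have "P (s n) \<le> P j" using n(1) Ple by blast
    moreover have "P (Suc j) \<le> P (s (Suc n))" using n(2) Ple by simp
    ultimately have sp3: "x - r1 \<le> \<rho> * (x - r0)" unfolding r0_def r1_def
      using sp2 rho by (smt (verit) mult_left_mono)
    have r01: "r0 \<le> r1" unfolding r0_def r1_def using Ple sinc[of n] by simp
    have "F (k + cc) \<le> n" using GF[of k] k(1) by simp
    from Fprop[OF this] have dif: "r1 - r0 < 1/2^(k+cc)" unfolding r0_def r1_def by simp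
    have "1/(2::real)^(k+cc) = (1/2^k) * (1/2^cc)" by (simp add: power_add)
    also have "\<dots> \<le> (1/2^k) * (1 - \<rho>)" using cc2 by (intro mult_left_mono) auto
    finally have dif2: "r1 - r0 < (1/2^k) * (1 - \<rho>)" using dif by linarith
    have "(1 - \<rho>) * (x - r1) \<le> \<rho> * (r1 - r0)" using sp3 by (simp add: algebra_simps)
    also have "\<dots> \<le> r1 - r0" using r01 rho by (simp add: mult_left_le_one_le)
    finally have "(1 - \<rho>) * (x - r1) < (1 - \<rho>) * (1/2^k)" using dif2 by (simp add: mult.commute)
    then have x1: "x - r1 < 1/2^k" using rho by (metis diff_gt_0_iff_gt mult_less_cancel_left_pos)
    have "Suc n \<le> G (Suc k)" using k by simp
    then have "s (Suc n) \<le> t k" unfolding t_def by (rule strict_mono_leD[OF smono])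
    then have "r1 \<le> P (t k)" unfolding r1_def using Ple by simp
    then show ?thesis using x1 kM by (intro exI[of _ k]) auto
  qed
  show ?thesis unfolding regainingly_approximable_def
  proof (intro exI[of _ "q \<circ> t"] conjI)
    show "computable_rat_seq (q \<circ> t)" by (rule computable_rat_seq_comp[OF qc tc])
    show "mono (q \<circ> t)"
      by (rule strict_mono_mono, rule strict_monoI) (simp add: strict_monoD[OF qm] strict_monoD[OF tmono])
    show "(\<lambda>n. real_of_rat ((q \<circ> t) n)) \<longlonglongrightarrow> x"
      using LIMSEQ_subseq_LIMSEQ[OF ql tmono] by (simp add: o_def)
    show "\<exists>\<^sub>\<infinity>n. x - real_of_rat ((q \<circ> t) n) < 2 powi - int n"
      unfolding INFM_nat two_powi using key by (simp add: P_def)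
  qed
qed

end
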